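(* Let $\mathcal C$ be a concept hierarchy with maximum level $2$ and let $\mathcal N$ be a network with maximum layer $1$ (with fixed weights, all engaged flags always $0$). Let $r_1,r_2$ satisfy: $0\le r_1\le r_2\le1$; $r_1k$ is not an integer; $(r_2')^2\le 2r_1'-(r_1')^2$, where $r_1'k=\lfloor r_1k\rfloor$ and $r_2'k=\lceil r_2k\rceil$. Then $\mathcal N$ does not $(r_1,r_2)$-recognize $\mathcal C$ in the sense of Assumptions 1–3.
   Context: Data model. Fix positive integers $\ell_{max},n,k$. A universal set $D$ of concepts is partitioned into disjoint $D_0,\dots,D_{\ell_{max}}$ with $|D_0|=n$. A concept hierarchy with maximum level $\ell_{max}$ consists of $C\subseteq D$ and $children$: with $C_\ell=C\cap D_\ell$, each $c\in C_\ell$ ($\ell\ge1$) has $children(c)\subseteq C_{\ell-1}$ of size $k$; $|C_{\ell_{max}}|=k$; distinct concepts on the same level have disjoint children sets. $leaves(c)$ is the set of level-$0$ descendants of $c$ (descendants: $c$ itself and, recursively, children of descendants). For $B\subseteq D_0$ and $r\in[0,1]$: $B_0=B\cap C_0$, $B_\ell=\{c\in C_\ell:|children(c)\cap B_{\ell-1}|\ge rk\}$, $supported_r(B)=\bigcup_\ell B_\ell$. Network model. Layers $N_0,\dots,N_{\ell'_{max}}$ of $n$ neurons each; every neuron of $N_\ell$ has an edge to every neuron of $N_{\ell+1}$, no other edges; bijection $rep:D_0\to N_0$. Each edge $(v,u)$ has a fixed weight in $[0,1]$ and each non-input neuron has a threshold $\tau$; discrete time; input firing is set externally; a non-input neuron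 $u$ fires at time $t$ iff $\sum_v weight(v,u)y^v(t-1)\ge\tau$, the sum over neurons $v$ of the layer below. $B\subseteq D_0$ is presented at time $t$ if the input neurons firing at time $t$ are exactly $rep(B)$. Assumptions: (1) every concept $c\in C$ has a unique designated neuron $rep(c)$ (for level-$0$ concepts the input neuron $rep(c)$; for concepts of level $\ge1$ a non-input neuron, in any layer); (2) for every $B\subseteq C_0$ presented at time $t$, if $c\in supported_{r_2}(B)$ then $rep(c)$ fires at time $t+layer(rep(c))$; (3) for every $B\subseteq C_0$ presented at time $t$, if $c\notin supported_{r_1}(B)$ then $rep(c)$ does not fire at time $t+layer(rep(c))$. *)

theory Defs
  imports Main "HOL-Library.Disjoint_Sets" Complex_Main
begin

text \<open>The universal set of concepts is partitioned into levels D 0, ..., D lmax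
  (the universal set D is their union). C is the set of concepts of the hierarchy,
  C_l = C \<inter> D l.\<close>

definition concept_hierarchy ::
  "nat \<Rightarrow> nat \<Rightarrow> nat \<Rightarrow> (nat \<Rightarrow> 'a set) \<Rightarrow> 'a set \<Rightarrow> ('a \<Rightarrow> 'a set) \<Rightarrow> bool" where
  "concept_hierarchy lmax n k D C children \<longleftrightarrow>
     (\<forall>i\<le>lmax. \<forall>j\<le>lmax. i \<noteq> j \<longrightarrow> D i \<inter> D j = {}) \<and>
     finite (D 0) \<and> card (D 0) = n \<and>
     C \<subseteq> (\<Union>l\<le>lmax. D l) \<and>
     (\<forall>l\<in>{1..lmax}. \<forall>c\<in>C \<inter> D l.
        children c \<subseteq> C \<inter> D (l - 1) \<and> finite (children c) \<and> card (children c) = k) \<and>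
     finite (C \<inter> D lmax) \<and> card (C \<inter> D lmax) = k \<and>
     (\<forall>l\<in>{1..lmax}. \<forall>c\<in>C \<inter> D l. \<forall>c'\<in>C \<inter> D l.
        c \<noteq> c' \<longrightarrow> children c \<inter> children c' = {})"

fun supp_level ::
  "real \<Rightarrow> nat \<Rightarrow> (nat \<Rightarrow> 'a set) \<Rightarrow> 'a set \<Rightarrow> ('a \<Rightarrow> 'a set) \<Rightarrow> 'a set \<Rightarrow> nat \<Rightarrow> 'a set" where
  "supp_level r k D C children B 0 = B \<inter> (C \<inter> D 0)"
| "supp_level r k D C children B (Suc l) =
     {c \<in> C \<inter> D (Suc l).
        real (card (children c \<inter> supp_level r k D C children B l)) \<ge> r * real k}"

definition supported ::
  "nat \<Rightarrow> real \<Rightarrow> nat \<Rightarrow> (nat \<Rightarrow> 'a set) \<Rightarrow> 'a set \<Rightarrow> ('a \<Rightarrow> 'a set) \<Rightarrow> 'a set \<Rightarrow> 'a set" where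
  "supported lmax r k D C children B = (\<Union>l\<le>lmax. supp_level r k D C children B l)"

definition network ::
  "nat \<Rightarrow> nat \<Rightarrow> (nat \<Rightarrow> 'b set) \<Rightarrow> ('b \<Rightarrow> 'b \<Rightarrow> real) \<Rightarrow> ('a \<Rightarrow> 'b) \<Rightarrow> 'a set \<Rightarrow> bool" where
  "network lmax' n N w rep D0 \<longleftrightarrow>
     (\<forall>i\<le>lmax'. \<forall>j\<le>lmax'. i \<noteq> j \<longrightarrow> N i \<inter> N j = {}) \<and>
     (\<forall>l\<le>lmax'. finite (N l) \<and> card (N l) = n) \<and>
     (\<forall>l<lmax'. \<forall>v\<in>N l. \<forall>u\<in>N (Suc l). 0 \<le> w v u \<and> w v u \<le> 1) \<and>
     bij_betw rep D0 (N 0)"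

text \<open>If B is presented at time t (input neurons firing at time t are exactly rep ` B),
  then fired_layer ... B l is the set of neurons of layer l firing at time t + l.
  (A neuron of layer l+1 fires at time t+l+1 iff the weighted sum of the layer-l neurons
  firing at time t+l reaches the threshold tau.)\<close>

fun fired_layer ::
  "(nat \<Rightarrow> 'b set) \<Rightarrow> ('b \<Rightarrow> 'b \<Rightarrow> real) \<Rightarrow> real \<Rightarrow> ('a \<Rightarrow> 'b) \<Rightarrow> 'a set \<Rightarrow> nat \<Rightarrow> 'b set" where
  "fired_layer N w \<tau> rep B 0 = rep ` B"
| "fired_layer N w \<tau> rep B (Suc l) =
     {u \<in> N (Suc l). (\<Sum>v\<in>N l. w v u * (if v \<in> fired_layer N w \<tau> rep B l then 1 else 0)) \<ge> \<tau>}"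

definition fires_in_time ::
  "nat \<Rightarrow> (nat \<Rightarrow> 'b set) \<Rightarrow> ('b \<Rightarrow> 'b \<Rightarrow> real) \<Rightarrow> real \<Rightarrow> ('a \<Rightarrow> 'b) \<Rightarrow> 'a set \<Rightarrow> 'b \<Rightarrow> bool" where
  "fires_in_time lmax' N w \<tau> rep B u \<longleftrightarrow>
     (\<exists>l\<le>lmax'. u \<in> N l \<and> u \<in> fired_layer N w \<tau> rep B l)"

definition recognizes ::
  "nat \<Rightarrow> nat \<Rightarrow> (nat \<Rightarrow> 'a set) \<Rightarrow> 'a set \<Rightarrow> ('a \<Rightarrow> 'a set) \<Rightarrow>
   nat \<Rightarrow> (nat \<Rightarrow> 'b set) \<Rightarrow> ('b \<Rightarrow> 'b \<Rightarrow> real) \<Rightarrow> real \<Rightarrow> ('a \<Rightarrow> 'b) \<Rightarrow>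
   real \<Rightarrow> real \<Rightarrow> bool" where
  "recognizes lmax k D C children lmax' N w \<tau> rep r1 r2 \<longleftrightarrow>
     \<comment> \<open>Assumption 1\<close>
     (\<forall>l\<in>{1..lmax}. \<forall>c\<in>C \<inter> D l. \<exists>l'\<in>{1..lmax'}. rep c \<in> N l') \<and>
     \<comment> \<open>Assumption 2\<close>
     (\<forall>B. B \<subseteq> C \<inter> D 0 \<longrightarrow> (\<forall>c\<in>supported lmax r2 k D C children B.
          fires_in_time lmax' N w \<tau> rep B (rep c))) \<and>
     \<comment> \<open>Assumption 3\<close>
     (\<forall>B. B \<subseteq> C \<inter> D 0 \<longrightarrow> (\<forall>c\<in>C. c \<notin> supported lmax r1 k D C children B \<longrightarrow>
          \<not> fires_in_time lmax' N w \<tau> rep B (rep c)))"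

end

theory Submission
  imports Defs
begin

lemma avg_le:
  fixes g :: "'x \<Rightarrow> real"
  shows "finite S \<Longrightarrow> card S = k \<Longrightarrow> m \<le> k \<Longrightarrow>
    \<exists>T\<subseteq>S. card T = m \<and> real k * sum g T \<le> real m * sum g S"
proof (induction k arbitrary: S)
  case 0
  then show ?case by auto
next
  case (Suc k)
  show ?case
  proof (cases "m = Suc k")
    case True
    then show ?thesis using Suc.prems by (intro exI[of _ S]) auto
  next
    case False
    then have mk: "m \<le> k" using Suc.prems by simp
    have ne: "S \<noteq> {}" using Suc.prems by auto
    have "Max (g ` S) \<in> g ` S" using ne Suc.prems(1) by simp
    then obtain x where x1: "x \<in> S" and xe: "g x = Max (g ` S)" by auto
    have x2: "\<forall>y\<in>S. g y \<le> g x" using xe Suc.prems(1) by simp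
    have f': "finite (S - {x})" "card (S - {x}) = k" using Suc.prems x1 by auto
    from Suc.IH[OF f' mk] obtain T where T: "T \<subseteq> S - {x}" "card T = m"
      "real k * sum g T \<le> real m * sum g (S - {x})" by blast
    have "sum g T \<le> real (card T) * g x"
      by (rule sum_bounded_above) (use T x2 in auto)
    then have b: "sum g T \<le> real m * g x" using T by simp
    have "sum g S = g x + sum g (S - {x})" using sum.remove[OF Suc.prems(1) x1] .
    then have "real (Suc k) * sum g T \<le> real m * sum g S"
      using T(3) b by (simp add: algebra_simps)
    then show ?thesis using T by blast
  qed
qed

lemma avg_ge:
  fixes g :: "'x \<Rightarrow> real"
  assumes "finite S" "card S = k" "m \<le> k"
  shows "\<exists>T\<subseteq>S. card T = m \<and> real k * sum g T \<ge> real m * sum g S"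
proof -
  obtain T where "T \<subseteq> S" "card T = m" "real k * sum (\<lambda>y. - g y) T \<le> real m * sum (\<lambda>y. - g y) S"
    using avg_le[OF assms, of "\<lambda>y. - g y"] by blast
  then show ?thesis by (auto simp: sum_negf)
qed

lemma nums:
  fixes r1 r2 :: real and k :: nat
  assumes k: "k > 0" and h5: "0 \<le> r1" and h6: "r1 \<le> r2" and h7: "r2 \<le> 1"
    and h8: "r1 * real k \<notin> \<int>"
    and h9: "(of_int \<lceil>r2 * real k\<rceil> / real k)\<^sup>2
           \<le> 2 * (of_int \<lfloor>r1 * real k\<rfloor> / real k) - (of_int \<lfloor>r1 * real k\<rfloor> / real k)\<^sup>2"
  shows "\<exists>a b :: nat. real a < r1 * real k \<and> real b \<ge> r2 * real k \<and> b \<le> k \<and> a \<le> k \<and>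
     real b ^ 2 \<le> 2 * real a * real k - real a ^ 2"
proof -
  have kpos: "real k > 0" using k by simp
  define a where "a = nat \<lfloor>r1 * real k\<rfloor>"
  define b where "b = nat \<lceil>r2 * real k\<rceil>"
  have r1k: "0 \<le> r1 * real k" using h5 by simp
  have r2k: "0 \<le> r2 * real k" using h5 h6 by simp
  have ra: "real a = of_int \<lfloor>r1 * real k\<rfloor>" unfolding a_def using r1k by simp
  have rb: "real b = of_int \<lceil>r2 * real k\<rceil>" unfolding b_def using r2k by simp
  have alt: "real a < r1 * real k"
  proof -
    have "real a \<le> r1 * real k" using ra by simp
    moreover have "real a \<noteq> r1 * real k" using ra h8 by (metis Ints_of_int)
    ultimately show ?thesis by simp
  qed
  have bge: "real b \<ge> r2 * real k" using rb by simp
  have "r2 * real k \<le> real k" using h7 kpos by simp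
  then have "\<lceil>r2 * real k\<rceil> \<le> int k" by (simp add: ceiling_le_iff)
  then have bk: "b \<le> k" unfolding b_def by (simp only: nat_le_iff)
  have ak: "a \<le> k"
  proof -
    have "r1 * real k \<le> real k" using h6 h7 kpos by simp
    then show ?thesis using alt by simp
  qed
  have key: "real b ^ 2 \<le> 2 * real a * real k - real a ^ 2"
  proof -
    have "(real b / real k)\<^sup>2 \<le> 2 * (real a / real k) - (real a / real k)\<^sup>2"
      using h9 unfolding ra[symmetric] rb[symmetric] .
    then have "real b ^ 2 / real k ^ 2 \<le> (2 * real a * real k - real a ^ 2) / real k ^ 2"
      using kpos by (simp add: power_divide diff_divide_distrib power2_eq_square)
    moreover have "real k ^ 2 > 0" using kpos by simp
    ultimately show ?thesis using divide_le_cancel by blast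
  qed
  show ?thesis using alt bge bk ak key by blast
qed

lemma ex_le_one: "(\<exists>l\<le>(1::nat). P l) \<longleftrightarrow> P 0 \<or> P 1"
  by (auto simp: le_Suc_eq)

theorem mainTheorem3:
  fixes D :: "nat \<Rightarrow> 'a set" and C :: "'a set" and children :: "'a \<Rightarrow> 'a set"
    and N :: "nat \<Rightarrow> 'b set" and w :: "'b \<Rightarrow> 'b \<Rightarrow> real" and \<tau> :: real
    and rep :: "'a \<Rightarrow> 'b" and n k :: nat and r1 r2 :: real
  assumes "n > 0" and "k > 0"
    and "concept_hierarchy 2 n k D C children"
    and "network 1 n N w rep (D 0)"
    and "0 \<le> r1" and "r1 \<le> r2" and "r2 \<le> 1"
    and "r1 * real k \<notin> \<int>"
    and "(of_int \<lceil>r2 * real k\<rceil> / real k)\<^sup>2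
           \<le> 2 * (of_int \<lfloor>r1 * real k\<rfloor> / real k) - (of_int \<lfloor>r1 * real k\<rfloor> / real k)\<^sup>2"
  shows "\<not> recognizes 2 k D C children 1 N w \<tau> rep r1 r2"
proof
  assume R: "recognizes 2 k D C children 1 N w \<tau> rep r1 r2"
  note CH = assms(3)[unfolded concept_hierarchy_def]
  note CHd = CH[THEN conjunct1]
  note CHc = CH[THEN conjunct2, THEN conjunct2, THEN conjunct2, THEN conjunct2, THEN conjunct1]
  note CHk = CH[THEN conjunct2, THEN conjunct2, THEN conjunct2, THEN conjunct2, THEN conjunct2, THEN conjunct2, THEN conjunct1]
  note CHj = CH[THEN conjunct2, THEN conjunct2, THEN conjunct2, THEN conjunct2, THEN conjunct2, THEN conjunct2, THEN conjunct2]
  note NW = assms(4)[unfolded network_def]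
  note NWd = NW[THEN conjunct1]
  note NWc = NW[THEN conjunct2, THEN conjunct1]
  note NWw = NW[THEN conjunct2, THEN conjunct2, THEN conjunct1]
  note bij = NW[THEN conjunct2, THEN conjunct2, THEN conjunct2]
  note RC = R[unfolded recognizes_def]
  note RC1 = RC[THEN conjunct1]
  note RC2 = RC[THEN conjunct2, THEN conjunct1]
  note RC3 = RC[THEN conjunct2, THEN conjunct2]
  have kpos: "real k > 0" using assms(2) by simp
  obtain a b :: nat where alt: "real a < r1 * real k" and bge: "real b \<ge> r2 * real k"
    and bk: "b \<le> k" and ak: "a \<le> k" and key: "real b ^ 2 \<le> 2 * real a * real k - real a ^ 2"
    using nums[OF assms(2,5,6,7,8,9)] by blast
  have "C \<inter> D 2 \<noteq> {}" using CHk assms(2) by (metis card.empty less_irrefl)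
  then obtain c where cC: "c \<in> C" and cD: "c \<in> D 2" by auto
  define K where "K = children c"
  have K: "K \<subseteq> C \<inter> D 1" "finite K" "card K = k"
  proof -
    have "c \<in> C \<inter> D 2" using cC cD by simp
    moreover have "(2::nat) \<in> {1..2}" by simp
    ultimately have "children c \<subseteq> C \<inter> D (2 - 1) \<and> finite (children c) \<and> card (children c) = k"
      using CHc by blast
    then show "K \<subseteq> C \<inter> D 1" "finite K" "card K = k" unfolding K_def by simp_all
  qed
  have ch: "\<And>d. d \<in> K \<Longrightarrow> children d \<subseteq> C \<inter> D 0 \<and> finite (children d) \<and> card (children d) = k"
  proof -
    fix d assume "d \<in> K"
    then have "d \<in> C \<inter> D 1" using K by auto
    then show "children d \<subseteq> C \<inter> D 0 \<and> finite (children d) \<and> card (children d) = k"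
    proof -
      have "(1::nat) \<in> {1..2}" by simp
      then have "children d \<subseteq> C \<inter> D (1 - 1) \<and> finite (children d) \<and> card (children d) = k"
        using CHc \<open>d \<in> C \<inter> D 1\<close> by blast
      then show ?thesis by simp
    qed
  qed
  have disj: "\<And>d d'. d \<in> K \<Longrightarrow> d' \<in> K \<Longrightarrow> d \<noteq> d' \<Longrightarrow> children d \<inter> children d' = {}"
  proof -
    fix d d' assume "d \<in> K" "d' \<in> K" "d \<noteq> d'"
    moreover have "(1::nat) \<in> {1..2}" by simp
    ultimately show "children d \<inter> children d' = {}" using CHj K by blast
  qed
  have D01: "D 0 \<inter> D 1 = {}" "D 0 \<inter> D 2 = {}" "D 1 \<inter> D 2 = {}" using CHd by auto
  define u where "u = rep c"
  have uN: "u \<in> N 1"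
  proof -
    have "c \<in> C \<inter> D 2" "(2::nat) \<in> {1..2}" using cC cD by auto
    then have "\<exists>l'\<in>{1..1}. rep c \<in> N l'" using RC1 by blast
    then show ?thesis unfolding u_def by simp
  qed
  have N01: "N 0 \<inter> N 1 = {}" using NWd[rule_format, of 0 1] by simp
  define \<omega> where "\<omega> y = w (rep y) u" for y
  have wnn: "\<And>y. y \<in> D 0 \<Longrightarrow> 0 \<le> \<omega> y"
  proof -
    fix y assume "y \<in> D 0"
    then have r0: "rep y \<in> N 0" by (rule bij_betw_apply[OF bij])
    have "u \<in> N (Suc 0)" using uN by simp
    then show "0 \<le> \<omega> y" unfolding \<omega>_def using NWw[rule_format, of 0 "rep y" u] r0 zero_less_one by blast
  qed
  have fire: "fires_in_time 1 N w \<tau> rep B u \<longleftrightarrow> \<tau> \<le> sum \<omega> B" if B: "B \<subseteq> C \<inter> D 0" for B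
  proof -
    have "fires_in_time 1 N w \<tau> rep B u \<longleftrightarrow> u \<in> fired_layer N w \<tau> rep B (Suc 0)"
      unfolding fires_in_time_def ex_le_one using uN N01 by auto
    also have "\<dots> \<longleftrightarrow> \<tau> \<le> (\<Sum>v\<in>N 0. w v u * (if v \<in> rep ` B then 1 else 0))"
      using uN by simp
    also have "(\<Sum>v\<in>N 0. w v u * (if v \<in> rep ` B then 1 else 0)) = sum (\<lambda>v. w v u) (rep ` B)"
    proof -
      have "rep ` B \<subseteq> N 0" using B bij bij_betw_imp_surj_on by blast
      then have "N 0 \<inter> rep ` B = rep ` B" by blast
      moreover have "(\<Sum>v\<in>N 0. w v u * (if v \<in> rep ` B then 1 else 0)) = (\<Sum>v\<in>N 0. if v \<in> rep ` B then w v u else 0)"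
        by (rule sum.cong) auto
      ultimately show ?thesis using NWc by (simp add: sum.If_cases)
    qed
    also have "\<dots> = sum \<omega> B"
    proof -
      have "inj_on rep B" using B bij by (meson bij_betw_imp_inj_on inj_on_subset le_inf_iff)
      then show ?thesis unfolding \<omega>_def by (simp add: sum.reindex)
    qed
    finally show ?thesis .
  qed
  define R where "R d = sum \<omega> (children d)" for d
  define W where "W = sum R K"
  have Rnn: "0 \<le> R d" if dK: "d \<in> K" for d
  proof -
    have "children d \<subseteq> C \<inter> D 0" using ch[OF dK] by blast
    then show ?thesis unfolding R_def by (intro sum_nonneg) (use wnn in blast)
  qed
  have Wnn: "0 \<le> W" unfolding W_def by (intro sum_nonneg) (use Rnn in blast)
  have "\<forall>d\<in>K. \<exists>T. T \<subseteq> children d \<and> card T = b \<and> real k * sum \<omega> T \<le> real b * R d"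
  proof
    fix d assume dK: "d \<in> K"
    show "\<exists>T. T \<subseteq> children d \<and> card T = b \<and> real k * sum \<omega> T \<le> real b * R d"
      using avg_le[of "children d" k b \<omega>] ch[OF dK] bk unfolding R_def by blast
  qed
  from bchoice[OF this] obtain T1 where T1a:
    "\<forall>d\<in>K. T1 d \<subseteq> children d \<and> card (T1 d) = b \<and> real k * sum \<omega> (T1 d) \<le> real b * R d"
    by (elim exE)
  have T1: "T1 d \<subseteq> children d \<and> card (T1 d) = b \<and> real k * sum \<omega> (T1 d) \<le> real b * R d"
    if "d \<in> K" for d by (rule bspec[OF T1a that])
  define m where "m d = sum \<omega> (T1 d)" for d
  obtain K1 where K1: "K1 \<subseteq> K" "card K1 = b" "real k * sum m K1 \<le> real b * sum m K"
    using avg_le[OF K(2,3) bk, of m] by blast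
  define B1 where "B1 = (\<Union>d\<in>K1. T1 d)"
  have B1C: "B1 \<subseteq> C \<inter> D 0"
  proof
    fix y assume "y \<in> B1"
    then obtain d where "d \<in> K1" "y \<in> T1 d" unfolding B1_def by blast
    moreover then have "d \<in> K" using K1(1) by blast
    ultimately show "y \<in> C \<inter> D 0" using T1 ch by blast
  qed
  have B1sum: "sum \<omega> B1 = sum m K1"
    unfolding B1_def m_def
  proof (rule sum.UNION_disjoint)
    show "finite K1" using K1(1) K(2) by (rule finite_subset)
    show "\<forall>i\<in>K1. finite (T1 i)"
    proof
      fix i assume "i \<in> K1"
      then have iK: "i \<in> K" using K1(1) by blast
      show "finite (T1 i)" using T1[OF iK] ch[OF iK] finite_subset by metis
    qed
    show "\<forall>i\<in>K1. \<forall>j\<in>K1. i \<noteq> j \<longrightarrow> T1 i \<inter> T1 j = {}"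
    proof (intro ballI impI)
      fix i j assume "i \<in> K1" "j \<in> K1" "i \<noteq> j"
      then have iK: "i \<in> K" and jK: "j \<in> K" and "children i \<inter> children j = {}"
        using K1(1) disj by auto
      then show "T1 i \<inter> T1 j = {}" using T1[OF iK] T1[OF jK] by blast
    qed
  qed
  have cs1: "c \<in> supported 2 r2 k D C children B1"
  proof -
    have sub: "K1 \<subseteq> children c \<inter> supp_level r2 k D C children B1 (Suc 0)"
    proof
      fix d assume dK1: "d \<in> K1"
      then have dK: "d \<in> K" using K1 by auto
      have "children d \<inter> B1 = T1 d"
      proof
        show "T1 d \<subseteq> children d \<inter> B1" using T1[OF dK] dK1 unfolding B1_def by blast
        show "children d \<inter> B1 \<subseteq> T1 d"
        proof
          fix y assume y: "y \<in> children d \<inter> B1"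
          then obtain d' where d': "d' \<in> K1" "y \<in> T1 d'" unfolding B1_def by blast
          have "d' = d"
          proof (rule ccontr)
            assume "d' \<noteq> d"
            then have "children d \<inter> children d' = {}" using disj dK d' K1 by blast
            then show False using y d' T1 K1 by blast
          qed
          then show "y \<in> T1 d" using d' by simp
        qed
      qed
      then have "children d \<inter> (B1 \<inter> (C \<inter> D 0)) = T1 d" using B1C by blast
      then have "real (card (children d \<inter> supp_level r2 k D C children B1 0)) \<ge> r2 * real k"
        using T1[OF dK] bge by simp
      then show "d \<in> children c \<inter> supp_level r2 k D C children B1 (Suc 0)"
        using dK K unfolding K_def by auto
    qed
    have "finite (children c \<inter> supp_level r2 k D C children B1 (Suc 0))"
      using K unfolding K_def by simp
    then have "card K1 \<le> card (children c \<inter> supp_level r2 k D C children B1 (Suc 0))"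
      using sub card_mono by blast
    then have "r2 * real k \<le> real (card (children c \<inter> supp_level r2 k D C children B1 (Suc 0)))"
      using K1 bge by linarith
    then have cl2: "c \<in> supp_level r2 k D C children B1 (Suc (Suc 0))"
      using cC cD by (simp add: numeral_2_eq_2)
    have "Suc (Suc 0) \<in> {..2::nat}" by simp
    then show ?thesis unfolding supported_def using cl2 by blast
  qed
  have "fires_in_time 1 N w \<tau> rep B1 u" using RC2[rule_format, OF B1C cs1] unfolding u_def .
  then have f1: "\<tau> \<le> sum \<omega> B1" using fire[OF B1C] by blast
  have "\<forall>d\<in>K. \<exists>T. T \<subseteq> children d \<and> card T = a \<and> real k * sum \<omega> T \<ge> real a * R d"
  proof
    fix d assume dK: "d \<in> K"
    show "\<exists>T. T \<subseteq> children d \<and> card T = a \<and> real k * sum \<omega> T \<ge> real a * R d"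
      using avg_ge[of "children d" k a \<omega>] ch[OF dK] ak unfolding R_def by blast
  qed
  from bchoice[OF this] obtain T2 where T2a:
    "\<forall>d\<in>K. T2 d \<subseteq> children d \<and> card (T2 d) = a \<and> real k * sum \<omega> (T2 d) \<ge> real a * R d"
    by (elim exE)
  have T2: "T2 d \<subseteq> children d \<and> card (T2 d) = a \<and> real k * sum \<omega> (T2 d) \<ge> real a * R d"
    if "d \<in> K" for d by (rule bspec[OF T2a that])
  define M where "M d = sum \<omega> (T2 d)" for d
  obtain K2 where K2: "K2 \<subseteq> K" "card K2 = a"
    "real k * sum (\<lambda>d. R d - M d) K2 \<ge> real a * sum (\<lambda>d. R d - M d) K"
    using avg_ge[OF K(2,3) ak, of "\<lambda>d. R d - M d"] by blast
  define A where "A d = (if d \<in> K2 then children d else T2 d)" for d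
  have Asub: "A d \<subseteq> children d" if "d \<in> K" for d using T2[OF that] unfolding A_def by auto
  define B2 where "B2 = (\<Union>d\<in>K. A d)"
  have B2C: "B2 \<subseteq> C \<inter> D 0"
  proof
    fix y assume "y \<in> B2"
    then obtain d where "d \<in> K" "y \<in> A d" unfolding B2_def by blast
    then show "y \<in> C \<inter> D 0" using Asub ch by blast
  qed
  have B2sum: "sum \<omega> B2 = (\<Sum>d\<in>K. sum \<omega> (A d))"
    unfolding B2_def
  proof (rule sum.UNION_disjoint)
    show "finite K" using K(2) .
    show "\<forall>i\<in>K. finite (A i)"
    proof
      fix i assume iK: "i \<in> K"
      show "finite (A i)" using Asub[OF iK] ch[OF iK] finite_subset by metis
    qed
    show "\<forall>i\<in>K. \<forall>j\<in>K. i \<noteq> j \<longrightarrow> A i \<inter> A j = {}"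
    proof (intro ballI impI)
      fix i j assume iK: "i \<in> K" and jK: "j \<in> K" and "i \<noteq> j"
      then have "children i \<inter> children j = {}" using disj by blast
      then show "A i \<inter> A j = {}" using Asub[OF iK] Asub[OF jK] by blast
    qed
  qed
  have B2int: "children d \<inter> B2 = A d" if dK: "d \<in> K" for d
  proof
    show "A d \<subseteq> children d \<inter> B2" using Asub[OF dK] dK unfolding B2_def by blast
    show "children d \<inter> B2 \<subseteq> A d"
    proof
      fix y assume y: "y \<in> children d \<inter> B2"
      then obtain d' where d': "d' \<in> K" "y \<in> A d'" unfolding B2_def by blast
      have "d' = d"
      proof (rule ccontr)
        assume "d' \<noteq> d"
        then have "children d \<inter> children d' = {}" using disj dK d' by blast
        then show False using y d' Asub by blast
      qed
      then show "y \<in> A d" using d' by simp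
    qed
  qed
  have cs2: "c \<notin> supported 2 r1 k D C children B2"
  proof
    assume "c \<in> supported 2 r1 k D C children B2"
    then obtain l where l: "l \<le> 2" "c \<in> supp_level r1 k D C children B2 l"
      unfolding supported_def by blast
    have "l = 0 \<or> l = 1 \<or> l = 2" using l(1) by auto
    moreover have "l \<noteq> 0"
    proof
      assume "l = 0"
      then have "c \<in> D 0" using l(2) by simp
      then show False using cD D01 by blast
    qed
    moreover have "l \<noteq> 1"
    proof
      assume "l = 1"
      then have "c \<in> D 1" using l(2) by simp
      then show False using cD D01 by blast
    qed
    ultimately have "l = 2" by blast
    then have cl: "r1 * real k \<le> real (card (children c \<inter> supp_level r1 k D C children B2 (Suc 0)))"
      using l(2) by (simp add: numeral_2_eq_2)
    have sub: "children c \<inter> supp_level r1 k D C children B2 (Suc 0) \<subseteq> K2"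
    proof
      fix d assume d: "d \<in> children c \<inter> supp_level r1 k D C children B2 (Suc 0)"
      then have dK: "d \<in> K" unfolding K_def by blast
      have ge: "r1 * real k \<le> real (card (children d \<inter> (B2 \<inter> (C \<inter> D 0))))" using d by simp
      show "d \<in> K2"
      proof (rule ccontr)
        assume "d \<notin> K2"
        then have "children d \<inter> (B2 \<inter> (C \<inter> D 0)) = T2 d"
          using B2int[OF dK] B2C unfolding A_def by auto
        then show False using ge T2[OF dK] alt by simp
      qed
    qed
    have "finite K2" using K2(1) K(2) by (rule finite_subset)
    then have "card (children c \<inter> supp_level r1 k D C children B2 (Suc 0)) \<le> card K2"
      using sub card_mono by blast
    then show False using cl K2(2) alt by linarith
  qed
  have "\<not> fires_in_time 1 N w \<tau> rep B2 u" using RC3[rule_format, OF B2C cC cs2] unfolding u_def .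
  then have f2: "sum \<omega> B2 < \<tau>" using fire[OF B2C] by simp
  have s1: "real k * sum m K \<le> real b * W"
  proof -
    have "real k * sum m K = (\<Sum>d\<in>K. real k * m d)" by (simp add: sum_distrib_left)
    also have "\<dots> \<le> (\<Sum>d\<in>K. real b * R d)" by (rule sum_mono) (use T1 in \<open>simp add: m_def\<close>)
    also have "\<dots> = real b * W" unfolding W_def by (simp add: sum_distrib_left)
    finally show ?thesis .
  qed
  have e1: "real k * real k * sum \<omega> B1 \<le> real b * real b * W"
  proof -
    have "real k * real k * sum \<omega> B1 = real k * (real k * sum m K1)" using B1sum by simp
    also have "\<dots> \<le> real k * (real b * sum m K)" using K1(3) kpos by simp
    also have "\<dots> = real b * (real k * sum m K)" by simp
    also have "\<dots> \<le> real b * (real b * W)" using s1 by (simp add: mult_left_mono)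
    finally show ?thesis by simp
  qed
  define SM where "SM = sum M K"
  define X where "X = sum (\<lambda>d. R d - M d) K2"
  have s2: "real k * SM \<ge> real a * W"
  proof -
    have "real a * W = (\<Sum>d\<in>K. real a * R d)" unfolding W_def by (simp add: sum_distrib_left)
    also have "\<dots> \<le> (\<Sum>d\<in>K. real k * M d)" by (rule sum_mono) (use T2 in \<open>simp add: M_def\<close>)
    also have "\<dots> = real k * SM" unfolding SM_def by (simp add: sum_distrib_left)
    finally show ?thesis .
  qed
  have hX: "real k * X \<ge> real a * (W - SM)"
    using K2(3) unfolding X_def W_def SM_def by (simp add: sum_subtractf)
  have f2eq: "sum \<omega> B2 = SM + X"
  proof -
    have "sum \<omega> B2 = (\<Sum>d\<in>K. M d + (if d \<in> K2 then R d - M d else 0))"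
      unfolding B2sum A_def R_def M_def by (rule sum.cong) auto
    also have "\<dots> = SM + (\<Sum>d\<in>K. if d \<in> K2 then R d - M d else 0)"
      unfolding SM_def by (simp add: sum.distrib)
    also have "(\<Sum>d\<in>K. if d \<in> K2 then R d - M d else 0) = X"
      unfolding X_def using K2(1) K(2) by (simp add: sum.If_cases Int_absorb1)
    finally show ?thesis .
  qed
  have ka: "0 \<le> real k - real a" using ak by simp
  have e2: "real k * real k * sum \<omega> B2 \<ge> (2 * real a * real k - real a ^ 2) * W"
  proof -
    have h1: "real k * (real k * X) \<ge> real k * (real a * (W - SM))"
      using hX kpos by (simp add: mult_left_mono)
    have h2: "(real k - real a) * (real k * SM) \<ge> (real k - real a) * (real a * W)"
      using s2 ka by (simp add: mult_left_mono)
    have "real k * real k * sum \<omega> B2 = real k * real k * SM + real k * (real k * X)"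
      using f2eq by (simp add: algebra_simps)
    also have "\<dots> \<ge> real k * real k * SM + real k * (real a * (W - SM))" using h1 by simp
    finally have "real k * real k * sum \<omega> B2 \<ge> (real k - real a) * (real k * SM) + real k * real a * W"
      by (simp add: algebra_simps)
    moreover have "(real k - real a) * (real k * SM) + real k * real a * W
        \<ge> (real k - real a) * (real a * W) + real k * real a * W" using h2 by simp
    ultimately show ?thesis by (simp add: algebra_simps power2_eq_square)
  qed
  have e3: "real b * real b * W \<le> (2 * real a * real k - real a ^ 2) * W"
    using key Wnn by (simp add: mult_right_mono power2_eq_square)
  have "real k * real k * sum \<omega> B1 \<le> real k * real k * sum \<omega> B2" using e1 e2 e3 by linarith
  then have "sum \<omega> B1 \<le> sum \<omega> B2" using kpos by simp
  then show False using f1 f2 by linarith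
qed

end
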